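(* Let $\rho$ be a $(0,\infty)$-valued random variable with $\mathbb E\rho=1$, $c_k>0$, $\mu_k>0$, $d_0\ge0$ and $d_{k+1}=\mathbb E\big[\frac{c_k(\mu_k\rho+d_k)}{c_k+(\mu_k\rho+d_k)}\big]$. Suppose $c_k\sim L_c(k)k^a$ and $\mu_k\sim L_\mu(k)k^b$ as $k\to\infty$ with $a,b\in\mathbb R$ and $L_c,L_\mu$ slowly varying at infinity, and that $K=\lim_{k\to\infty}\mu_k/c_k\in[0,\infty]$ exists. Then: (a) if $K=\infty$, $\lim_{k\to\infty}d_k/c_k=1$; (b) if $K\in(0,\infty)$, $\lim_{k\to\infty}d_k/c_k=M$, where $M\in(0,1)$ is the unique solution of $M=\mathbb E\big[\frac{K\rho+M}{1+(K\rho+M)}\big]$. *)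

theory Defs
  imports "HOL-Probability.Probability" "HOL-Library.Landau_Symbols"
begin

definition slowly_varying :: "(real \<Rightarrow> real) \<Rightarrow> bool" where
  "slowly_varying L \<longleftrightarrow>
     L \<in> borel_measurable borel \<and>
     (\<forall>\<^sub>F x in at_top. L x > 0) \<and>
     (\<forall>l>0. ((\<lambda>x. L (l * x) / L x) \<longlongrightarrow> 1) at_top)"

end

theory Submission
  imports Defs "HOL-Real_Asymp.Real_Asymp"
begin


lemma emeasure_lborel_scale:
  fixes t :: real
  assumes t: "t > 0" and B: "B \<in> sets borel"
  shows "emeasure lborel B = ennreal t * emeasure lborel ((\<lambda>x. t*x) -` B)"
proof -
  have "emeasure lborel B = emeasure (density (distr lborel borel (\<lambda>x. 0 + t*x)) (\<lambda>_. ennreal \<bar>t\<bar>)) B"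
    using lborel_real_affine[of t 0] t by simp
  also have "\<dots> = ennreal t * emeasure lborel ((\<lambda>x. t*x) -` B)"
    using t B by (simp add: emeasure_density nn_integral_cmult_indicator emeasure_distr)
  finally show ?thesis .
qed

lemma sv_shift:
  assumes "slowly_varying L"
  shows "(\<lambda>n. L (real (Suc n)) / L (real n)) \<longlonglongrightarrow> 1"
proof -
  from assms have Lmeas[measurable]: "L \<in> borel_measurable borel"
    and pos: "\<forall>\<^sub>F x in at_top. L x > 0"
    and lim: "\<And>l. l>0 \<Longrightarrow> ((\<lambda>x. L(l*x)/L x) \<longlongrightarrow> 1) at_top"
    unfolding slowly_varying_def by auto
  from pos obtain X where X: "\<And>x. x \<ge> X \<Longrightarrow> L x > 0" by (auto simp: eventually_at_top_linorder)
  show ?thesis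
  proof (rule LIMSEQ_I)
    fix r :: real assume r: "r > 0"
    define \<epsilon> where "\<epsilon> = min (1/4) (r/4)"
    have \<epsilon>: "0 < \<epsilon>" "\<epsilon> \<le> 1/4" "4*\<epsilon> \<le> r" using r by (auto simp: \<epsilon>_def)
    define A where "A n = {l\<in>{1..2::real}. \<forall>m\<ge>n. \<bar>L (l * real m) / L (real m) - 1\<bar> < \<epsilon>}" for n
    have Ameas: "A n \<in> sets lborel" for n unfolding A_def by measurable
    have inc: "incseq A" by (auto simp: incseq_def A_def)
    have Un: "(\<Union>n. A n) = {1..2}"
    proof
      show "(\<Union>n. A n) \<subseteq> {1..2}" by (auto simp: A_def)
      show "{1..2} \<subseteq> (\<Union>n. A n)"
      proof
        fix l :: real assume l: "l \<in> {1..2}"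
        have "((\<lambda>m. L(l*real m)/L (real m)) \<longlonglongrightarrow> 1)"
          using filterlim_compose[OF lim filterlim_real_sequentially, of l] l by simp
        from LIMSEQ_D[OF this \<epsilon>(1)] obtain n where "\<forall>m\<ge>n. norm (L(l*real m)/L (real m) - 1) < \<epsilon>" by blast
        then have "l \<in> A n" using l by (auto simp: A_def)
        then show "l \<in> (\<Union>n. A n)" by blast
      qed
    qed
    have "(\<lambda>n. emeasure lborel (A n)) \<longlonglongrightarrow> emeasure lborel {1..2::real}"
      using Lim_emeasure_incseq[of A lborel] Ameas inc Un by auto
    then have "(\<lambda>n. emeasure lborel (A n)) \<longlonglongrightarrow> ennreal 1" by simp
    from order_tendstoD(1)[OF this, of "ennreal (3/4)"]
    obtain n0 where n0: "ennreal (3/4) < emeasure lborel (A n0)"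
      by (auto simp: eventually_sequentially ennreal_less_iff)
    define B where "B = {1..2} - A n0"
    have Bmeas: "B \<in> sets borel" using Ameas unfolding B_def by auto
    have fin: "emeasure lborel (A n0) \<noteq> top"
    proof -
      have "emeasure lborel (A n0) \<le> emeasure lborel {1..2::real}"
        by (rule emeasure_mono) (auto simp: A_def)
      then show ?thesis by (auto simp: top_unique)
    qed
    have mA: "measure lborel (A n0) > 3/4"
    proof -
      have "ennreal (3/4) < ennreal (measure lborel (A n0))"
        using n0 emeasure_eq_ennreal_measure[OF fin] by simp
      then show ?thesis by (subst (asm) ennreal_less_iff) auto
    qed
    have eB: "emeasure lborel B = ennreal (measure lborel B)"
    proof (rule emeasure_eq_ennreal_measure)
      have "emeasure lborel B \<le> emeasure lborel {1..2::real}"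
        by (rule emeasure_mono) (auto simp: B_def)
      then show "emeasure lborel B \<noteq> top" by (auto simp: top_unique)
    qed
    have mB: "measure lborel B < 1/4"
    proof -
      have "measure lborel B = measure lborel {1..2::real} - measure lborel (A n0)"
        unfolding B_def by (rule measure_Diff) (auto simp: Ameas A_def)
      then show ?thesis using mA by simp
    qed
    define N where "N = max n0 (max 3 (nat \<lceil>X\<rceil>))"
    have N: "N \<ge> n0" "N \<ge> 3" unfolding N_def by auto
    have N3: "real N \<ge> X" unfolding N_def using real_nat_ceiling_ge[of X]
      by (simp add: of_nat_max le_max_iff_disj)
    show "\<exists>no. \<forall>n\<ge>no. norm (L (real (Suc n)) / L (real n) - 1) < r"
    proof (intro exI allI impI)
      fix m assume m: "N \<le> m"
      define t where "t = real (Suc m) / real m"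
      have mpos: "real m \<ge> 3" using m N by linarith
      have t1: "1 \<le> t" and t2: "t \<le> 4/3" using mpos by (auto simp: t_def field_simps)
      have "\<exists>l. l \<in> {1..3/2} \<and> l \<in> A n0 \<and> l*t \<in> A n0"
      proof (rule ccontr)
        assume nex: "\<not> (\<exists>l. l \<in> {1..3/2} \<and> l \<in> A n0 \<and> l*t \<in> A n0)"
        have sub: "{1..3/2::real} \<subseteq> B \<union> ((\<lambda>x. t*x) -` B)"
        proof
          fix x :: real assume x: "x \<in> {1..3/2}"
          have "1 \<le> t*x" using x t1 mult_mono[of 1 t 1 x] by auto
          moreover have "t*x \<le> 2" using x t1 t2 mult_mono[of t "4/3" x "3/2"] by auto
          moreover have "x \<le> 2" using x by auto
          ultimately show "x \<in> B \<union> ((\<lambda>x. t*x) -` B)"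
            using x nex unfolding B_def by (auto simp: mult.commute)
        qed
        have fm: "(\<lambda>x::real. t*x) \<in> borel_measurable borel" by measurable
        have Pmeas: "(\<lambda>x. t*x) -` B \<in> sets borel"
          using measurable_sets[OF fm Bmeas] by simp
        have pre: "emeasure lborel ((\<lambda>x. t*x) -` B) \<le> emeasure lborel B"
        proof -
          have "emeasure lborel ((\<lambda>x. t*x) -` B) \<le> ennreal t * emeasure lborel ((\<lambda>x. t*x) -` B)"
          proof -
            have "(1::ennreal) \<le> ennreal t" using t1 by (metis ennreal_1 ennreal_leI)
            from mult_right_mono[OF this, of "emeasure lborel ((\<lambda>x. t*x) -` B)"] show ?thesis by simp
          qed
          also have "\<dots> = emeasure lborel B" using emeasure_lborel_scale[OF _ Bmeas, of t] t1 by simp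
          finally show ?thesis .
        qed
        have "ennreal (1/2) = emeasure lborel {1..3/2::real}" by simp
        also have "\<dots> \<le> emeasure lborel (B \<union> ((\<lambda>x. t*x) -` B))"
          by (rule emeasure_mono[OF sub]) (use Bmeas Pmeas in simp)
        also have "\<dots> \<le> emeasure lborel B + emeasure lborel ((\<lambda>x. t*x) -` B)"
          by (rule emeasure_subadditive) (use Bmeas Pmeas in auto)
        also have "\<dots> \<le> ennreal (measure lborel B) + ennreal (measure lborel B)"
          using pre eB by (metis add_mono order_refl)
        also have "\<dots> = ennreal (2 * measure lborel B)" by (simp add: ennreal_plus[symmetric] del: ennreal_plus)
        finally have "ennreal (1/2) \<le> ennreal (2 * measure lborel B)" .
        then have "1/2 \<le> 2 * measure lborel B" by (rule ennreal_le_iff[THEN iffD1, rotated]) simp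
        then show False using mB by simp
      qed
      then obtain l where l: "l \<in> {1..3/2}" "l \<in> A n0" "l*t \<in> A n0" by blast
      have a: "\<bar>L (l * t * real m) / L (real m) - 1\<bar> < \<epsilon>" using l(3) m N by (auto simp: A_def)
      have b: "\<bar>L (l * real (Suc m)) / L (real (Suc m)) - 1\<bar> < \<epsilon>" 
      proof -
        have "Suc m \<ge> n0" using m N by simp
        then show ?thesis using l(2) unfolding A_def by blast
      qed
      have eq: "l * t * real m = l * real (Suc m)" using mpos by (simp add: t_def)
      have L1: "L (real m) > 0" "L (real (Suc m)) > 0" using X N3 m by (auto intro!: X)
      define u where "u = L (l * real (Suc m))"
      have a': "\<bar>u / L (real m) - 1\<bar> < \<epsilon>" using a eq u_def by simp
      have b': "\<bar>u / L (real (Suc m)) - 1\<bar> < \<epsilon>" using b u_def by simp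
      have key: "L (real (Suc m)) / L (real m) = (u / L (real m)) / (u / L (real (Suc m)))"
        using L1 b' \<epsilon> by (cases "u = 0") (auto simp: field_simps)
      define p where "p = u / L (real m)"
      define q where "q = u / L (real (Suc m))"
      have pq: "\<bar>p - 1\<bar> < \<epsilon>" "\<bar>q - 1\<bar> < \<epsilon>" using a' b' p_def q_def by auto
      have qpos: "q \<ge> 3/4" using pq \<epsilon> by linarith
      have "\<bar>p / q - 1\<bar> = \<bar>p - q\<bar> / q" using qpos by (simp add: field_simps abs_div)
      also have "\<dots> \<le> \<bar>p - q\<bar> / (3/4)" using qpos by (intro divide_left_mono) auto
      also have "\<dots> < (2*\<epsilon>) / (3/4)" using pq by (intro divide_strict_right_mono) auto
      also have "\<dots> \<le> r" using \<epsilon> by simp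
      finally show "norm (L (real (Suc m)) / L (real m) - 1) < r" using key p_def q_def by simp
    qed
  qed
qed



lemma phi_lip:
  fixes a b c :: real
  assumes "0 \<le> c" "c \<le> a" "c \<le> b"
  shows "\<bar>a/(1+a) - b/(1+b)\<bar> \<le> \<bar>a-b\<bar>/(1+c)"
proof -
  have eq: "a/(1+a) - b/(1+b) = (a-b)/((1+a)*(1+b))" using assms by (simp add: field_simps)
  have le: "1 + c \<le> (1+a)*(1+b)" using assms mult_mono[of 1 "1+a" "1+c" "1+b"] by (simp add: algebra_simps) 
  have "\<bar>a/(1+a) - b/(1+b)\<bar> = \<bar>a-b\<bar>/((1+a)*(1+b))" using assms by (simp add: eq abs_div abs_mult)
  also have "\<dots> \<le> \<bar>a-b\<bar>/(1+c)" using le assms by (intro divide_left_mono) auto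
  finally show ?thesis .
qed

lemma phi_bounds:
  fixes y :: real
  assumes "0 \<le> y"
  shows "0 \<le> y/(1+y)" "y/(1+y) < 1" "y/(1+y) = 1 - 1/(1+y)"
  using assms by (auto simp: field_simps)

lemma (in prob_space) integral_pos_pos:
  fixes f :: "'a \<Rightarrow> real"
  assumes f: "integrable M f" and pos: "\<And>x. x \<in> space M \<Longrightarrow> f x > 0"
  shows "integral\<^sup>L M f > 0"
proof -
  have nn: "0 \<le> integral\<^sup>L M f" using pos by (intro integral_nonneg_AE AE_I2) (auto intro: less_imp_le)
  have "integral\<^sup>L M f \<noteq> 0"
  proof
    assume z: "integral\<^sup>L M f = 0"
    have nnAE: "AE x in M. 0 \<le> f x" using pos by (auto intro!: AE_I2 less_imp_le)
    from integral_nonneg_eq_0_iff_AE[OF f nnAE] z have "AE x in M. f x = 0" by simp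
    then have "AE x in M. False"
      by (rule AE_mp) (auto intro!: AE_I2 dest: pos)
    then show False by simp
  qed
  with nn show ?thesis by simp
qed

lemma contr_conv:
  fixes e \<delta> :: "nat \<Rightarrow> real"
  assumes e0: "\<And>k. 0 \<le> e k" and rec: "\<And>k. e (Suc k) \<le> \<theta> * e k + \<delta> k"
    and th: "0 \<le> \<theta>" "\<theta> < 1" and d: "\<delta> \<longlonglongrightarrow> 0"
  shows "e \<longlonglongrightarrow> 0"
proof (rule LIMSEQ_I)
  fix \<epsilon> :: real assume \<epsilon>: "\<epsilon> > 0"
  have "(1-\<theta>)*\<epsilon>/2 > 0" using \<epsilon> th by simp
  from LIMSEQ_D[OF d this] obtain N where N: "\<And>k. k \<ge> N \<Longrightarrow> \<bar>\<delta> k\<bar> < (1-\<theta>)*\<epsilon>/2" by auto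
  have ind: "e (N + j) \<le> \<theta>^j * e N + \<epsilon>/2" for j
  proof (induction j)
    case 0 then show ?case using \<epsilon> by simp
  next
    case (Suc j)
    have "e (N + Suc j) \<le> \<theta> * e (N+j) + \<delta> (N+j)" using rec[of "N+j"] by simp
    also have "\<dots> \<le> \<theta> * (\<theta>^j * e N + \<epsilon>/2) + (1-\<theta>)*\<epsilon>/2"
      using Suc.IH N[of "N+j"] th by (intro add_mono mult_left_mono) auto
    also have "\<dots> = \<theta>^(Suc j) * e N + \<epsilon>/2" by (simp add: field_simps)
    finally show ?case .
  qed
  have "(\<lambda>j. \<theta>^j * e N) \<longlonglongrightarrow> 0"
    using th by (intro tendsto_mult_left_zero LIMSEQ_power_zero) auto
  from LIMSEQ_D[OF this, of "\<epsilon>/2"] \<epsilon> obtain J where J: "\<And>j. j \<ge> J \<Longrightarrow> \<bar>\<theta>^j * e N\<bar> < \<epsilon>/2" by auto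
  show "\<exists>no. \<forall>n\<ge>no. norm (e n - 0) < \<epsilon>"
  proof (intro exI allI impI)
    fix n assume n: "N + J \<le> n"
    then have "e n = e (N + (n - N))" by simp
    also have "\<dots> \<le> \<theta>^(n-N) * e N + \<epsilon>/2" by (rule ind)
    also have "\<dots> < \<epsilon>"
    proof -
      have "J \<le> n-N" using n by arith
      then have "\<bar>\<theta>^(n-N) * e N\<bar> < \<epsilon>/2" using J by blast
      then show ?thesis using abs_ge_self[of "\<theta>^(n-N)*e N"] by linarith
    qed
    finally show "norm (e n - 0) < \<epsilon>" using e0[of n] by simp
  qed
qed

lemma c_ratio:
  fixes c :: "nat \<Rightarrow> real" and Lc :: "real \<Rightarrow> real"
  assumes cpos: "\<And>k. c k > 0" and sv: "slowly_varying Lc"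
    and eq: "c \<sim>[sequentially] (\<lambda>k. Lc (real k) * real k powr a)"
  shows "(\<lambda>k. c k / c (Suc k)) \<longlonglongrightarrow> 1"
proof -
  define g where "g k = Lc (real k) * real k powr a" for k
  from sv obtain X where X: "\<And>x. x \<ge> X \<Longrightarrow> Lc x > 0"
    unfolding slowly_varying_def by (auto simp: eventually_at_top_linorder)
  have gpos: "eventually (\<lambda>k. g k > 0) sequentially"
  proof -
    have "eventually (\<lambda>k. real k \<ge> max 1 X) sequentially"
    proof -
      have "\<forall>Z. eventually (\<lambda>k. Z \<le> real k) sequentially"
        using filterlim_real_sequentially unfolding filterlim_at_top by blast
      then show ?thesis by blast
    qed  
    then show ?thesis by eventually_elim (auto simp: g_def intro!: mult_pos_pos X)
  qed
  have cg: "(\<lambda>k. c k / g k) \<longlonglongrightarrow> 1"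
  proof -
    have "(\<lambda>k. if c k = 0 \<and> g k = 0 then 1 else c k / g k) \<longlonglongrightarrow> 1"
      using asymp_equivD[OF eq] unfolding g_def by simp
    moreover have "(\<lambda>k. if c k = 0 \<and> g k = 0 then 1 else c k / g k) = (\<lambda>k. c k / g k)"
      using cpos by (auto intro!: ext simp: less_imp_neq[symmetric])
    ultimately show ?thesis by simp
  qed
  have cg': "(\<lambda>k. c (Suc k) / g (Suc k)) \<longlonglongrightarrow> 1" using LIMSEQ_Suc[OF cg] .
  have t1: "(\<lambda>k. real (Suc k) / real k) \<longlonglongrightarrow> 1" by real_asymp
  have "(\<lambda>k. (real (Suc k) / real k) powr a) \<longlonglongrightarrow> 1 powr a"
    by (rule tendsto_powr[OF t1 tendsto_const]) simp
  then have pw: "(\<lambda>k. (real (Suc k) / real k) powr a) \<longlonglongrightarrow> 1" by simp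
  have "(\<lambda>k. (c (Suc k) / g (Suc k)) * (Lc (real (Suc k)) / Lc (real k) * (real (Suc k) / real k) powr a) / (c k / g k)) \<longlonglongrightarrow> 1 * (1 * 1) / 1"
    by (intro tendsto_intros cg cg' pw sv_shift[OF sv]) auto
  then have lim: "(\<lambda>k. (c (Suc k) / g (Suc k)) * (Lc (real (Suc k)) / Lc (real k) * (real (Suc k) / real k) powr a) / (c k / g k)) \<longlonglongrightarrow> 1" by simp
  have ev: "eventually (\<lambda>k. (c (Suc k) / g (Suc k)) * (Lc (real (Suc k)) / Lc (real k) * (real (Suc k) / real k) powr a) / (c k / g k) = c (Suc k) / c k) sequentially"
  proof -
    have "eventually (\<lambda>k. real k \<ge> max 1 X) sequentially"
    proof -
      have "\<forall>Z. eventually (\<lambda>k. Z \<le> real k) sequentially"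
        using filterlim_real_sequentially unfolding filterlim_at_top by blast
      then show ?thesis by blast
    qed
    then show ?thesis
    proof eventually_elim
      case (elim k)
      have k1: "real k \<ge> 1" "real k \<ge> X" "real (Suc k) \<ge> X" using elim by auto
      have L: "Lc (real k) > 0" "Lc (real (Suc k)) > 0" using X k1 by auto
      have p: "(real (Suc k) / real k) powr a = real (Suc k) powr a / real k powr a"
        using k1 by (simp add: powr_divide)
      have pp: "real k powr a > 0" "real (Suc k) powr a > 0" using k1 by auto
      show ?case unfolding g_def p using L pp cpos[of k] cpos[of "Suc k"]
        by (simp add: field_simps)
    qed
  qed
  have "(\<lambda>k. c (Suc k) / c k) \<longlonglongrightarrow> 1" using tendsto_cong[OF ev] lim by simp
  then have "(\<lambda>k. inverse (c (Suc k) / c k)) \<longlonglongrightarrow> inverse 1" by (intro tendsto_inverse) auto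
  then show ?thesis by (simp add: inverse_eq_divide)
qed



lemma aux_frac:
  fixes c X :: real
  assumes "c > 0" "X > 0"
  shows "c * X / (c + X) = c * ((X / c) / ((c + X) / c))"
  using assms by (simp add: field_simps)

theorem theorem3p10:
  fixes M :: "'a measure" and \<rho> :: "'a \<Rightarrow> real"
    and c \<mu> d :: "nat \<Rightarrow> real" and a b :: real
    and Lc L\<mu> :: "real \<Rightarrow> real" and K :: ereal
  assumes "prob_space M"
    and "\<rho> \<in> borel_measurable M"
    and "\<forall>x\<in>space M. \<rho> x > 0"
    and "integrable M \<rho>" and "(\<integral>x. \<rho> x \<partial>M) = 1"
    and "\<forall>k. c k > 0" and "\<forall>k. \<mu> k > 0" and "d 0 \<ge> 0"
    and "\<forall>k. d (Suc k) = (\<integral>x. c k * (\<mu> k * \<rho> x + d k) / (c k + (\<mu> k * \<rho> x + d k)) \<partial>M)"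
    and "slowly_varying Lc" and "slowly_varying L\<mu>"
    and "c \<sim>[sequentially] (\<lambda>k. Lc (real k) * real k powr a)"
    and "\<mu> \<sim>[sequentially] (\<lambda>k. L\<mu> (real k) * real k powr b)"
    and "K \<ge> 0"
    and "(\<lambda>k. ereal (\<mu> k / c k)) \<longlonglongrightarrow> K"
  shows "(K = \<infinity> \<longrightarrow> (\<lambda>k. d k / c k) \<longlonglongrightarrow> 1) \<and>
         (0 < K \<and> K < \<infinity> \<longrightarrow>
            (\<exists>!m. 0 < m \<and> m < 1 \<and>
                 m = (\<integral>x. (real_of_ereal K * \<rho> x + m) / (1 + (real_of_ereal K * \<rho> x + m)) \<partial>M))
          \<and> (\<lambda>k. d k / c k) \<longlonglongrightarrow>
              (THE m. 0 < m \<and> m < 1 \<and>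
                 m = (\<integral>x. (real_of_ereal K * \<rho> x + m) / (1 + (real_of_ereal K * \<rho> x + m)) \<partial>M)))"
proof -
  interpret P: prob_space M by fact
  note rho_meas[measurable] = assms(2)
  have rho_pos: "\<And>x. x \<in> space M \<Longrightarrow> \<rho> x > 0" using assms(3) by auto
  have c_pos: "\<And>k. c k > 0" using assms(6) by auto
  have mu_pos: "\<And>k. \<mu> k > 0" using assms(7) by auto
  define G where "G s r = (\<integral>x. (s * \<rho> x + r) / (1 + (s * \<rho> x + r)) \<partial>M)" for s r
  define H where "H s r = (\<integral>x. 1 / (1 + (s * \<rho> x + r)) \<partial>M)" for s r
  have y0: "0 \<le> s * \<rho> x + r" if "s \<ge> 0" "r \<ge> 0" "x \<in> space M" for s r x
    using that rho_pos[of x] by simp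
  have Gint: "integrable M (\<lambda>x. (s * \<rho> x + r) / (1 + (s * \<rho> x + r)))" if "s \<ge> 0" "r \<ge> 0" for s r
  proof (rule P.integrable_const_bound[where B=1])
    show "AE x in M. norm ((s * \<rho> x + r) / (1 + (s * \<rho> x + r))) \<le> 1"
    proof (rule AE_I2)
      fix x assume x: "x \<in> space M"
      from phi_bounds[OF y0[OF that x]] show "norm ((s * \<rho> x + r) / (1 + (s * \<rho> x + r))) \<le> 1" by simp
    qed
  qed simp
  have Hint: "integrable M (\<lambda>x. 1 / (1 + (s * \<rho> x + r)))" if "s \<ge> 0" "r \<ge> 0" for s r
  proof (rule P.integrable_const_bound[where B=1])
    show "AE x in M. norm (1 / (1 + (s * \<rho> x + r))) \<le> 1"
    proof (rule AE_I2)
      fix x assume x: "x \<in> space M"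
      from y0[OF that x] show "norm (1 / (1 + (s * \<rho> x + r))) \<le> 1" by simp
    qed
  qed simp
  have GH: "G s r = 1 - H s r" if "s \<ge> 0" "r \<ge> 0" for s r
  proof -
    have "G s r = (\<integral>x. 1 - 1 / (1 + (s * \<rho> x + r)) \<partial>M)"
      unfolding G_def by (intro Bochner_Integration.integral_cong refl phi_bounds(3) y0 that)
    also have "\<dots> = 1 - H s r" unfolding H_def
      using Hint[OF that] by (subst Bochner_Integration.integral_diff) (auto simp: P.prob_space)
    finally show ?thesis .
  qed
  have Hpos: "H s r > 0" if "s \<ge> 0" "r \<ge> 0" for s r
    unfolding H_def using Hint[OF that] by (intro P.integral_pos_pos) (auto dest: y0[OF that] intro!: divide_pos_pos)
  have Gpos: "G s r > 0" if "s > 0" "r \<ge> 0" for s r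
    unfolding G_def using Gint[of s r] that
    by (intro P.integral_pos_pos) (auto intro!: divide_pos_pos add_pos_nonneg dest: rho_pos)
  have Gnn: "G s r \<ge> 0" if "s \<ge> 0" "r \<ge> 0" for s r
    unfolding G_def using that by (intro integral_nonneg_AE AE_I2) (auto dest: y0 phi_bounds(1))
  have Glt: "G s r < 1" if "s \<ge> 0" "r \<ge> 0" for s r
    using GH[OF that] Hpos[OF that] by simp
  have Hle: "H s 0 \<le> 1" if "s \<ge> 0" for s
    using GH[OF that order_refl] Gnn[OF that order_refl] by simp
  have Glip: "\<bar>G s r - G s r'\<bar> \<le> H s 0 * \<bar>r - r'\<bar>" if "s \<ge> 0" "r \<ge> 0" "r' \<ge> 0" for s r r'
  proof -
    have "\<bar>G s r - G s r'\<bar> = \<bar>\<integral>x. (s * \<rho> x + r) / (1 + (s * \<rho> x + r)) - (s * \<rho> x + r') / (1 + (s * \<rho> x + r')) \<partial>M\<bar>"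
      unfolding G_def using Gint[of s r] Gint[of s r'] that by (subst Bochner_Integration.integral_diff) auto
    also have "\<dots> \<le> (\<integral>x. \<bar>(s * \<rho> x + r) / (1 + (s * \<rho> x + r)) - (s * \<rho> x + r') / (1 + (s * \<rho> x + r'))\<bar> \<partial>M)"
      by (rule integral_abs_bound)
    also have "\<dots> \<le> (\<integral>x. \<bar>r - r'\<bar> * (1 / (1 + (s * \<rho> x + 0))) \<partial>M)"
    proof (rule integral_mono)
      show "integrable M (\<lambda>x. \<bar>(s * \<rho> x + r) / (1 + (s * \<rho> x + r)) - (s * \<rho> x + r') / (1 + (s * \<rho> x + r'))\<bar>)"
        using Gint[of s r] Gint[of s r'] that by auto
      show "integrable M (\<lambda>x. \<bar>r - r'\<bar> * (1 / (1 + (s * \<rho> x + 0))))"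
        using integrable_mult_right[OF Hint[of s 0], of "\<bar>r - r'\<bar>"] that by simp
      fix x assume x: "x \<in> space M"
      have "\<bar>(s * \<rho> x + r) / (1 + (s * \<rho> x + r)) - (s * \<rho> x + r') / (1 + (s * \<rho> x + r'))\<bar>
            \<le> \<bar>(s * \<rho> x + r) - (s * \<rho> x + r')\<bar> / (1 + s * \<rho> x)"
        using y0[of s 0 x] x that by (intro phi_lip) auto
      then show "\<bar>(s * \<rho> x + r) / (1 + (s * \<rho> x + r)) - (s * \<rho> x + r') / (1 + (s * \<rho> x + r'))\<bar>
            \<le> \<bar>r - r'\<bar> * (1 / (1 + (s * \<rho> x + 0)))" by simp
    qed
    also have "\<dots> = H s 0 * \<bar>r - r'\<bar>" using integral_mult_right_zero[where c="\<bar>r - r'\<bar>" and M=M and f="\<lambda>x. 1 / (1 + (s * \<rho> x + 0))"] unfolding H_def by (simp add: mult.commute)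
    finally show ?thesis .
  qed
  have Glips: "\<bar>G s r - G s' r\<bar> \<le> \<bar>s - s'\<bar>" if "s \<ge> 0" "s' \<ge> 0" "r \<ge> 0" for s s' r
  proof -
    have "\<bar>G s r - G s' r\<bar> = \<bar>\<integral>x. (s * \<rho> x + r) / (1 + (s * \<rho> x + r)) - (s' * \<rho> x + r) / (1 + (s' * \<rho> x + r)) \<partial>M\<bar>"
      unfolding G_def using Gint[of s r] Gint[of s' r] that by (subst Bochner_Integration.integral_diff) auto
    also have "\<dots> \<le> (\<integral>x. \<bar>(s * \<rho> x + r) / (1 + (s * \<rho> x + r)) - (s' * \<rho> x + r) / (1 + (s' * \<rho> x + r))\<bar> \<partial>M)"
      by (rule integral_abs_bound)
    also have "\<dots> \<le> (\<integral>x. \<bar>s - s'\<bar> * \<rho> x \<partial>M)"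
    proof (rule integral_mono)
      show "integrable M (\<lambda>x. \<bar>(s * \<rho> x + r) / (1 + (s * \<rho> x + r)) - (s' * \<rho> x + r) / (1 + (s' * \<rho> x + r))\<bar>)"
        using Gint[of s r] Gint[of s' r] that by auto
      show "integrable M (\<lambda>x. \<bar>s - s'\<bar> * \<rho> x)"
        using assms(4) by auto
      fix x assume x: "x \<in> space M"
      have "\<bar>(s * \<rho> x + r) / (1 + (s * \<rho> x + r)) - (s' * \<rho> x + r) / (1 + (s' * \<rho> x + r))\<bar>
            \<le> \<bar>(s * \<rho> x + r) - (s' * \<rho> x + r)\<bar> / (1 + 0)"
        using y0[of s r x] y0[of s' r x] x that by (intro phi_lip) auto
      also have "\<dots> = \<bar>s - s'\<bar> * \<rho> x" using rho_pos[OF x]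
        by (simp add: left_diff_distrib[symmetric] abs_mult)
      finally show "\<bar>(s * \<rho> x + r) / (1 + (s * \<rho> x + r)) - (s' * \<rho> x + r) / (1 + (s' * \<rho> x + r))\<bar>
            \<le> \<bar>s - s'\<bar> * \<rho> x" .
    qed
    also have "\<dots> = \<bar>s - s'\<bar>" using assms(5) by simp
    finally show ?thesis .
  qed
  define r where "r k = d k / c k" for k
  define Kk where "Kk k = \<mu> k / c k" for k
  define q where "q k = c k / c (Suc k)" for k
  have Kk_pos: "Kk k > 0" for k unfolding Kk_def using c_pos mu_pos by simp
  have dstep: "d k \<ge> 0 \<Longrightarrow> d (Suc k) = c k * G (Kk k) (r k)" for k
  proof -
    assume dk: "d k \<ge> 0"
    have "d (Suc k) = (\<integral>x. c k * ((Kk k * \<rho> x + r k) / (1 + (Kk k * \<rho> x + r k))) \<partial>M)"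
      unfolding assms(9)[rule_format]
    proof (rule Bochner_Integration.integral_cong[OF refl])
      fix x assume x: "x \<in> space M"
      have X: "\<mu> k * \<rho> x + d k > 0" using mu_pos[of k] rho_pos[OF x] dk by (simp add: add_pos_nonneg)
      have ck: "c k > 0" by (rule c_pos)
      have e1: "Kk k * \<rho> x + r k = (\<mu> k * \<rho> x + d k) / c k" unfolding Kk_def r_def using c_pos[of k] by (simp add: add_divide_distrib)
      have e2: "1 + (\<mu> k * \<rho> x + d k) / c k = (c k + (\<mu> k * \<rho> x + d k)) / c k" using ck by (simp add: field_simps)
      show "c k * (\<mu> k * \<rho> x + d k) / (c k + (\<mu> k * \<rho> x + d k)) = c k * ((Kk k * \<rho> x + r k) / (1 + (Kk k * \<rho> x + r k)))"
        unfolding e1 e2 using aux_frac[OF ck X] by simp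
    qed
    also have "\<dots> = c k * G (Kk k) (r k)" unfolding G_def by (rule integral_mult_right_zero)
    finally show ?thesis .
  qed
  have dnn: "d k \<ge> 0" for k
  proof (induction k)
    case 0 then show ?case using assms(8) by simp
  next
    case (Suc k)
    have "r k \<ge> 0" unfolding r_def using Suc c_pos[of k] by simp
    then show ?case using dstep[OF Suc] Gnn[of "Kk k" "r k"] Kk_pos[of k] c_pos[of k] by simp
  qed
  have rnn: "r k \<ge> 0" for k unfolding r_def using dnn[of k] c_pos[of k] by simp
  have rec: "r (Suc k) = q k * G (Kk k) (r k)" for k
    unfolding r_def[of "Suc k"] q_def dstep[OF dnn] by simp
  have qlim: "q \<longlonglongrightarrow> 1" unfolding q_def by (rule c_ratio[OF c_pos assms(10) assms(12)])
  have qnn: "q k \<ge> 0" for k unfolding q_def using c_pos[of k] c_pos[of "Suc k"] by simp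
  show ?thesis
  proof (intro conjI impI)
    assume Kinf: "K = \<infinity>"
    have Kt: "filterlim Kk at_top sequentially"
      using assms(15) Kinf unfolding Kk_def by (simp add: tendsto_PInfty_eq_at_top)
    have hlim: "(\<lambda>k. G (Kk k) 0) \<longlonglongrightarrow> 1"
    proof -
      have "(\<lambda>k. \<integral>x. (Kk k * \<rho> x + 0) / (1 + (Kk k * \<rho> x + 0)) \<partial>M) \<longlonglongrightarrow> (\<integral>x. 1 \<partial>M)"
      proof (rule integral_dominated_convergence[where w="\<lambda>_. 1"])
        show "AE x in M. (\<lambda>k. (Kk k * \<rho> x + 0) / (1 + (Kk k * \<rho> x + 0))) \<longlonglongrightarrow> 1"
        proof (rule AE_I2)
          fix x assume x: "x \<in> space M"
          have "filterlim (\<lambda>k. \<rho> x * Kk k) at_top sequentially"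
            by (rule filterlim_tendsto_pos_mult_at_top[OF tendsto_const rho_pos[OF x] Kt])
          then have "filterlim (\<lambda>k. 1 + \<rho> x * Kk k) at_top sequentially"
            by (rule filterlim_tendsto_add_at_top[OF tendsto_const])
          then have "(\<lambda>k. inverse (1 + \<rho> x * Kk k)) \<longlonglongrightarrow> 0"
            by (rule tendsto_inverse_0_at_top)
          then have "(\<lambda>k. 1 - inverse (1 + \<rho> x * Kk k)) \<longlonglongrightarrow> 1 - 0"
            by (intro tendsto_intros)
          moreover have "(Kk k * \<rho> x + 0) / (1 + (Kk k * \<rho> x + 0)) = 1 - inverse (1 + \<rho> x * Kk k)" for k
            using phi_bounds(3)[OF y0[of "Kk k" 0 x]] Kk_pos[of k] x by (simp add: mult.commute inverse_eq_divide)
          ultimately show "(\<lambda>k. (Kk k * \<rho> x + 0) / (1 + (Kk k * \<rho> x + 0))) \<longlonglongrightarrow> 1" by simp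
        qed
        show "AE x in M. norm ((Kk k * \<rho> x + 0) / (1 + (Kk k * \<rho> x + 0))) \<le> 1" for k
        proof (rule AE_I2)
          fix x assume x: "x \<in> space M"
          from phi_bounds[OF y0[of "Kk k" 0 x]] x Kk_pos[of k]
          show "norm ((Kk k * \<rho> x + 0) / (1 + (Kk k * \<rho> x + 0))) \<le> 1" by simp
        qed
      qed auto
      then show ?thesis unfolding G_def by (simp add: P.prob_space)
    qed
    have lower: "q k * G (Kk k) 0 \<le> r (Suc k)" for k
    proof -
      have "G (Kk k) 0 \<le> G (Kk k) (r k)"
        unfolding G_def
      proof (rule integral_mono)
        show "integrable M (\<lambda>x. (Kk k * \<rho> x + 0) / (1 + (Kk k * \<rho> x + 0)))"
          using Gint[of "Kk k" 0] Kk_pos[of k] by simp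
        show "integrable M (\<lambda>x. (Kk k * \<rho> x + r k) / (1 + (Kk k * \<rho> x + r k)))"
          using Gint[of "Kk k" "r k"] Kk_pos[of k] rnn[of k] by simp
        fix x assume x: "x \<in> space M"
        have u: "0 \<le> Kk k * \<rho> x" using y0[of "Kk k" 0 x] x Kk_pos[of k] by simp
        have "(Kk k * \<rho> x + 0) / (1 + (Kk k * \<rho> x + 0)) = 1 - 1 / (1 + (Kk k * \<rho> x + 0))"
          using phi_bounds(3)[of "Kk k * \<rho> x + 0"] u by simp
        also have "\<dots> \<le> 1 - 1 / (1 + (Kk k * \<rho> x + r k))"
          using u rnn[of k] by (intro diff_left_mono divide_left_mono) auto
        also have "\<dots> = (Kk k * \<rho> x + r k) / (1 + (Kk k * \<rho> x + r k))"
          using phi_bounds(3)[of "Kk k * \<rho> x + r k"] u rnn[of k] by simp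
        finally show "(Kk k * \<rho> x + 0) / (1 + (Kk k * \<rho> x + 0)) \<le> (Kk k * \<rho> x + r k) / (1 + (Kk k * \<rho> x + r k))" .
      qed
      then show ?thesis unfolding rec using qnn[of k] by (intro mult_left_mono) auto
    qed
    have upper: "r (Suc k) \<le> q k" for k
      unfolding rec using Glt[of "Kk k" "r k"] Kk_pos[of k] rnn[of k] qnn[of k]
      by (simp add: mult_left_le)
    have "(\<lambda>k. r (Suc k)) \<longlonglongrightarrow> 1"
    proof (rule tendsto_sandwich[OF always_eventually always_eventually])
      show "\<forall>k. q k * G (Kk k) 0 \<le> r (Suc k)" using lower by blast
      show "\<forall>k. r (Suc k) \<le> q k" using upper by blast
      show "(\<lambda>k. q k * G (Kk k) 0) \<longlonglongrightarrow> 1" using tendsto_mult[OF qlim hlim] by simp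
      show "q \<longlonglongrightarrow> 1" by (rule qlim)
    qed
    then show "(\<lambda>k. d k / c k) \<longlonglongrightarrow> 1"
      unfolding r_def[symmetric] by (subst (asm) filterlim_sequentially_Suc)
  next
    assume Kfin: "0 < K \<and> K < \<infinity>"
    define k0 where "k0 = real_of_ereal K"
    have K_eq: "K = ereal k0" using Kfin unfolding k0_def by (cases K) auto
    have k0pos: "k0 > 0" using Kfin K_eq by simp
    have Klim: "Kk \<longlonglongrightarrow> k0" using assms(15) K_eq unfolding Kk_def by simp
    define \<theta> where "\<theta> = H k0 0"
    have th: "0 \<le> \<theta>" "\<theta> < 1"
      using Hpos[of k0 0] GH[of k0 0] Gpos[of k0 0] k0pos unfolding \<theta>_def by auto
    have contr: "\<bar>G k0 u - G k0 v\<bar> \<le> \<theta> * \<bar>u - v\<bar>" if "u \<ge> 0" "v \<ge> 0" for u v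
      using Glip[of k0 u v] that k0pos unfolding \<theta>_def by simp
    have ex: "\<exists>!m. 0 < m \<and> m < 1 \<and> m = G k0 m"
    proof -
      have "\<exists>!x\<in>{0..1::real}. G k0 x = x"
      proof (rule Banach_fix)
        show "Topological_Spaces.complete {0..1::real}" by (simp add: complete_eq_closed)
        show "G k0 ` {0..1} \<subseteq> {0..1}"
        proof
          fix y assume "y \<in> G k0 ` {0..1}"
          then obtain x where x: "x \<in> {0..1::real}" "y = G k0 x" by blast
          then show "y \<in> {0..1}" using Gnn[of k0 x] Glt[of k0 x] k0pos by auto
        qed
        show "dist (G k0 x) (G k0 y) \<le> \<theta> * dist x y" if "x \<in> {0..1}" "y \<in> {0..1}" for x y
          using contr[of x y] that by (simp add: dist_real_def)
      qed (use th in auto)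
      then obtain m where m: "m \<in> {0..1}" "G k0 m = m" by blast
      have m1: "0 < m \<and> m < 1 \<and> m = G k0 m"
        using m Gpos[of k0 m] Glt[of k0 m] k0pos by auto
      have uniq: "m' = m" if "0 < m' \<and> m' < 1 \<and> m' = G k0 m'" for m'
      proof -
        have "\<bar>m' - m\<bar> \<le> \<theta> * \<bar>m' - m\<bar>" using contr[of m' m] that m1 by simp
        then have "(1 - \<theta>) * \<bar>m' - m\<bar> \<le> 0" by (simp add: algebra_simps)
        then have "\<bar>m' - m\<bar> \<le> 0" using th by (simp add: mult_le_0_iff)
        then show ?thesis by simp
      qed
      show ?thesis using m1 uniq by blast
    qed
    define mstar where "mstar = (THE m. 0 < m \<and> m < 1 \<and> m = G k0 m)"
    have ms: "0 < mstar \<and> mstar < 1 \<and> mstar = G k0 mstar"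
      unfolding mstar_def by (rule theI'[OF ex])
    have "r \<longlonglongrightarrow> mstar"
    proof -
      define e where "e k = \<bar>r k - mstar\<bar>" for k
      define \<delta> where "\<delta> k = \<bar>q k - 1\<bar> + \<bar>Kk k - k0\<bar>" for k
      have "e \<longlonglongrightarrow> 0"
      proof (rule contr_conv[OF _ _ th])
        show "0 \<le> e k" for k unfolding e_def by simp
        show "\<delta> \<longlonglongrightarrow> 0" unfolding \<delta>_def
          using tendsto_add[OF tendsto_rabs[OF LIM_zero[OF qlim]] tendsto_rabs[OF LIM_zero[OF Klim]]] by simp
        show "e (Suc k) \<le> \<theta> * e k + \<delta> k" for k
        proof -
          have g1: "0 \<le> G (Kk k) (r k)" "G (Kk k) (r k) \<le> 1"
            using Gnn[of "Kk k" "r k"] Glt[of "Kk k" "r k"] Kk_pos[of k] rnn[of k] by auto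
          have "r (Suc k) - mstar = (q k - 1) * G (Kk k) (r k) + (G (Kk k) (r k) - G k0 (r k)) + (G k0 (r k) - G k0 mstar)"
            unfolding rec using ms by (simp add: algebra_simps)
          then have "e (Suc k) \<le> \<bar>(q k - 1) * G (Kk k) (r k)\<bar> + \<bar>G (Kk k) (r k) - G k0 (r k)\<bar> + \<bar>G k0 (r k) - G k0 mstar\<bar>"
            unfolding e_def by linarith
          also have "\<dots> \<le> \<bar>q k - 1\<bar> + \<bar>Kk k - k0\<bar> + \<theta> * \<bar>r k - mstar\<bar>"
          proof (intro add_mono)
            show "\<bar>(q k - 1) * G (Kk k) (r k)\<bar> \<le> \<bar>q k - 1\<bar>"
              using g1 by (simp add: abs_mult mult_left_le)
            show "\<bar>G (Kk k) (r k) - G k0 (r k)\<bar> \<le> \<bar>Kk k - k0\<bar>"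
              using Glips[of "Kk k" k0 "r k"] Kk_pos[of k] k0pos rnn[of k] by simp
            show "\<bar>G k0 (r k) - G k0 mstar\<bar> \<le> \<theta> * \<bar>r k - mstar\<bar>"
              using contr[of "r k" mstar] rnn[of k] ms by simp
          qed
          finally show ?thesis unfolding e_def \<delta>_def by simp
        qed
      qed
      then have "(\<lambda>k. \<bar>r k - mstar\<bar>) \<longlonglongrightarrow> 0" unfolding e_def .
      then have "(\<lambda>k. r k - mstar) \<longlonglongrightarrow> 0" by (rule tendsto_rabs_zero_cancel)
      then show ?thesis by (rule LIM_zero_cancel)
    qed
    then show "(\<lambda>k. d k / c k) \<longlonglongrightarrow> (THE m. 0 < m \<and> m < 1 \<and>
                 m = (\<integral>x. (real_of_ereal K * \<rho> x + m) / (1 + (real_of_ereal K * \<rho> x + m)) \<partial>M))"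
      unfolding mstar_def r_def G_def k0_def .
    show "\<exists>!m. 0 < m \<and> m < 1 \<and>
                 m = (\<integral>x. (real_of_ereal K * \<rho> x + m) / (1 + (real_of_ereal K * \<rho> x + m)) \<partial>M)"
      using ex unfolding G_def k0_def .
  qed
qed


end
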